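(* Consider Algorithm LB-Search (described in the context) run on an $n$-vertex graph with parameter $\eta$. If during the execution of the algorithm, over the total $\tau$ queries, at most $r\cdot\tau$ replies were erroneous (with arbitrary distribution of the errors), then the algorithm outputs the target.
   Context: Setting: $G=(V,E)$ is a finite simple connected graph with $n$ vertices and an unknown target vertex $v^{*}$. A query on vertex $q$ returns a reply $v$; a correct reply is $v=q$ if $q=v^{*}$, and otherwise a neighbor of $q$ on a shortest path from $q$ to $v^{*}$; an erroneous reply may be arbitrary. A vertex $u$ is consistent (compatible) with reply $v$ to query $q$ if $q=v=u$, or $q\ne v$ and $v$ lies on a shortest path between $u$ and $q$; $N(q,v)$ denotes the set of such $u$. For weights $\omega\colon V\to(0,\infty)$ and $X\subseteq V$ let $\omega(X)=\sum_{u\in X}\omega(u)$, $\Lambda(v)=\max_{u\in N(v)}\omega(N(v,u))$ where $N(v)$ is the neighbor set, and call $q$ $\delta$-close to a median if $\Lambda(q)\le(\frac12+\delta)\omega(V)$. Parameters: $0<\eta<\frac18$, $r=\frac12-\eta$, $\delta=\eta/4$, $\Gamma=\frac{1}{1-4\eta}$, $\tau=\frac{10\log_2 n}{\eta^2}$. Algorithm LB-Search: set $\omega(v)=1/n$ and a counter $\ell_v=0$ for every $v$. Repeat for $\tau$ steps: let $q$ be any vertex that is $\delta$-close to a median with respect to the current weights; query $q$; for each vertex $u$ not compatible with the reply, set $\omega(u)\gets\omega(u)/\Gamma$ and $\ell_u\gets\ell_u+1$. Finally return a vertex $v$ with the smallest $\ell_v$. *)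

theory Defs
  imports Complex_Main
begin

definition simple_graph :: "'a set \<Rightarrow> ('a \<Rightarrow> 'a \<Rightarrow> bool) \<Rightarrow> bool" where
  "simple_graph V E \<longleftrightarrow> finite V \<and> (\<forall>u v. E u v \<longrightarrow> u \<in> V \<and> v \<in> V)
     \<and> (\<forall>u v. E u v \<longrightarrow> E v u) \<and> (\<forall>u. \<not> E u u)"

fun walk :: "('a \<Rightarrow> 'a \<Rightarrow> bool) \<Rightarrow> 'a list \<Rightarrow> bool" where
  "walk E [] = False"
| "walk E [x] = True"
| "walk E (x # y # xs) = (E x y \<and> walk E (y # xs))"

definition connected_graph :: "'a set \<Rightarrow> ('a \<Rightarrow> 'a \<Rightarrow> bool) \<Rightarrow> bool" where
  "connected_graph V E \<longleftrightarrow> V \<noteq> {} \<and>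
     (\<forall>u\<in>V. \<forall>v\<in>V. \<exists>xs. walk E xs \<and> hd xs = u \<and> last xs = v)"

definition gdist :: "('a \<Rightarrow> 'a \<Rightarrow> bool) \<Rightarrow> 'a \<Rightarrow> 'a \<Rightarrow> nat" where
  "gdist E u v = (LEAST k. \<exists>xs. walk E xs \<and> hd xs = u \<and> last xs = v \<and> length xs = Suc k)"

definition on_shortest_path :: "('a \<Rightarrow> 'a \<Rightarrow> bool) \<Rightarrow> 'a \<Rightarrow> 'a \<Rightarrow> 'a \<Rightarrow> bool" where
  "on_shortest_path E w a b \<longleftrightarrow> gdist E a w + gdist E w b = gdist E a b"

definition correct_reply :: "('a \<Rightarrow> 'a \<Rightarrow> bool) \<Rightarrow> 'a \<Rightarrow> 'a \<Rightarrow> 'a \<Rightarrow> bool" where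
  "correct_reply E t q v \<longleftrightarrow>
     (if q = t then v = q else E q v \<and> on_shortest_path E v q t)"

definition compatible :: "('a \<Rightarrow> 'a \<Rightarrow> bool) \<Rightarrow> 'a \<Rightarrow> 'a \<Rightarrow> 'a \<Rightarrow> bool" where
  "compatible E q v u \<longleftrightarrow> (q = v \<and> v = u) \<or> (q \<noteq> v \<and> on_shortest_path E v u q)"

definition Ncomp :: "'a set \<Rightarrow> ('a \<Rightarrow> 'a \<Rightarrow> bool) \<Rightarrow> 'a \<Rightarrow> 'a \<Rightarrow> 'a set" where
  "Ncomp V E q v = {u\<in>V. compatible E q v u}"

definition wsum :: "('a \<Rightarrow> real) \<Rightarrow> 'a set \<Rightarrow> real" where
  "wsum \<omega> X = (\<Sum>u\<in>X. \<omega> u)"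

definition Lam :: "'a set \<Rightarrow> ('a \<Rightarrow> 'a \<Rightarrow> bool) \<Rightarrow> ('a \<Rightarrow> real) \<Rightarrow> 'a \<Rightarrow> real" where
  "Lam V E \<omega> v = Max (insert 0 ((\<lambda>u. wsum \<omega> (Ncomp V E v u)) ` {u\<in>V. E v u}))"

definition delta_close :: "'a set \<Rightarrow> ('a \<Rightarrow> 'a \<Rightarrow> bool) \<Rightarrow> ('a \<Rightarrow> real) \<Rightarrow> real \<Rightarrow> 'a \<Rightarrow> bool" where
  "delta_close V E \<omega> \<delta> q \<longleftrightarrow> Lam V E \<omega> q \<le> (1/2 + \<delta>) * wsum \<omega> V"

definition ctr :: "('a \<Rightarrow> 'a \<Rightarrow> bool) \<Rightarrow> 'a list \<Rightarrow> 'a list \<Rightarrow> nat \<Rightarrow> 'a \<Rightarrow> nat" where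
  "ctr E qs vs i u = card {j. j < i \<and> \<not> compatible E (qs ! j) (vs ! j) u}"

definition wt :: "nat \<Rightarrow> real \<Rightarrow> ('a \<Rightarrow> 'a \<Rightarrow> bool) \<Rightarrow> 'a list \<Rightarrow> 'a list \<Rightarrow> nat \<Rightarrow> 'a \<Rightarrow> real" where
  "wt n \<Gamma> E qs vs i u = (1 / real n) / \<Gamma> ^ ctr E qs vs i u"

(* an execution of LB-Search of length T: each query is delta-close to a median
   w.r.t. the current weights; replies are arbitrary vertices *)
definition LB_execution ::
  "'a set \<Rightarrow> ('a \<Rightarrow> 'a \<Rightarrow> bool) \<Rightarrow> real \<Rightarrow> real \<Rightarrow> nat \<Rightarrow> 'a list \<Rightarrow> 'a list \<Rightarrow> bool" where
  "LB_execution V E \<delta> \<Gamma> T qs vs \<longleftrightarrow> length qs = T \<and> length vs = T \<and>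
     set qs \<subseteq> V \<and> set vs \<subseteq> V \<and>
     (\<forall>i<T. delta_close V E (wt (card V) \<Gamma> E qs vs i) \<delta> (qs ! i))"

definition num_errors :: "('a \<Rightarrow> 'a \<Rightarrow> bool) \<Rightarrow> 'a \<Rightarrow> nat \<Rightarrow> 'a list \<Rightarrow> 'a list \<Rightarrow> nat" where
  "num_errors E t T qs vs = card {i. i < T \<and> \<not> correct_reply E t (qs ! i) (vs ! i)}"

end

theory Submission
  imports Defs "HOL-Analysis.Convex"
begin

definition reach :: "('a \<Rightarrow> 'a \<Rightarrow> bool) \<Rightarrow> 'a \<Rightarrow> 'a \<Rightarrow> bool" where
  "reach E u v \<longleftrightarrow> (\<exists>xs. walk E xs \<and> hd xs = u \<and> last xs = v)"

lemma walk_nonempty: "walk E xs \<Longrightarrow> xs \<noteq> []"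
  by (cases xs) auto

lemma walk_Cons: "walk E (x # xs) \<Longrightarrow> xs \<noteq> [] \<Longrightarrow> walk E xs \<and> E x (hd xs)"
  by (cases xs) auto

lemma walk_append:
  "walk E xs \<Longrightarrow> walk E ys \<Longrightarrow> last xs = hd ys \<Longrightarrow> walk E (xs @ tl ys)"
proof (induction xs)
  case Nil then show ?case by simp
next
  case (Cons x xs)
  show ?case
  proof (cases xs)
    case Nil then show ?thesis using Cons.prems by (cases ys; cases "tl ys") auto
  next
    case (Cons y zs) then show ?thesis using Cons.prems Cons.IH by auto
  qed
qed

lemma walk_rev: "(\<forall>u v. E u v \<longrightarrow> E v u) \<Longrightarrow> walk E xs \<Longrightarrow> walk E (rev xs)"
proof (induction xs)
  case Nil then show ?case by simp
next
  case (Cons x xs)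
  show ?case
  proof (cases xs)
    case Nil then show ?thesis by simp
  next
    case (Cons y zs)
    have w: "walk E (rev xs)" using Cons.IH Cons.prems \<open>xs = y # zs\<close> by auto
    have "walk E (rev xs @ tl [y, x])"
      by (rule walk_append[OF w]) (use Cons.prems \<open>xs = y # zs\<close> in auto)
    then show ?thesis using \<open>xs = y # zs\<close> by simp
  qed
qed

lemma gdist_ex:
  assumes "reach E u v"
  shows "\<exists>xs. walk E xs \<and> hd xs = u \<and> last xs = v \<and> length xs = Suc (gdist E u v)"
proof -
  obtain xs where xs: "walk E xs" "hd xs = u" "last xs = v" using assms reach_def by metis
  then have "\<exists>k xs. walk E xs \<and> hd xs = u \<and> last xs = v \<and> length xs = Suc k"
    using walk_nonempty by (metis Suc_pred length_greater_0_conv)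
  then show ?thesis unfolding gdist_def by (rule LeastI_ex)
qed

lemma gdist_le:
  assumes "walk E xs" "hd xs = u" "last xs = v"
  shows "gdist E u v \<le> length xs - 1"
proof -
  have "length xs = Suc (length xs - 1)" using walk_nonempty[OF assms(1)] by simp
  then show ?thesis unfolding gdist_def using assms by (metis (mono_tags, lifting) Least_le)
qed

lemma gdist_refl: "gdist E u u = 0"
  using gdist_le[of E "[u]" u u] by simp

lemma gdist_zero:
  assumes "reach E u v" "gdist E u v = 0" shows "u = v"
proof -
  obtain xs where xs: "walk E xs" "hd xs = u" "last xs = v" "length xs = Suc 0"
    using gdist_ex[OF assms(1)] assms(2) by auto
  then obtain x where "xs = [x]" by (metis length_0_conv length_Suc_conv)
  then show ?thesis using xs by simp
qed

lemma reach_sym: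
  assumes "\<forall>u v. E u v \<longrightarrow> E v u" "reach E u v" shows "reach E v u"
proof -
  obtain xs where xs: "walk E xs" "hd xs = u" "last xs = v" using assms reach_def by metis
  have "xs \<noteq> []" using walk_nonempty xs by auto
  then show ?thesis unfolding reach_def
    using walk_rev[OF assms(1) xs(1)] xs by (intro exI[of _ "rev xs"]) (simp add: hd_rev last_rev)
qed

lemma gdist_sym_le:
  assumes "\<forall>u v. E u v \<longrightarrow> E v u" "reach E u v" shows "gdist E v u \<le> gdist E u v"
proof -
  obtain xs where xs: "walk E xs" "hd xs = u" "last xs = v" "length xs = Suc (gdist E u v)"
    using gdist_ex[OF assms(2)] by auto
  have "xs \<noteq> []" using walk_nonempty xs by auto
  then have "gdist E v u \<le> length (rev xs) - 1"
    using walk_rev[OF assms(1) xs(1)] xs by (intro gdist_le) (simp_all add: hd_rev last_rev)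
  then show ?thesis using xs by simp
qed

lemma gdist_sym:
  assumes "\<forall>u v. E u v \<longrightarrow> E v u" "reach E u v" shows "gdist E u v = gdist E v u"
  using gdist_sym_le[OF assms] gdist_sym_le[OF assms(1) reach_sym[OF assms]] by simp

lemma gdist_tri:
  assumes "reach E u v" "reach E v w" shows "gdist E u w \<le> gdist E u v + gdist E v w"
proof -
  obtain xs where xs: "walk E xs" "hd xs = u" "last xs = v" "length xs = Suc (gdist E u v)"
    using gdist_ex[OF assms(1)] by auto
  obtain ys where ys: "walk E ys" "hd ys = v" "last ys = w" "length ys = Suc (gdist E v w)"
    using gdist_ex[OF assms(2)] by auto
  have w: "walk E (xs @ tl ys)" using walk_append xs ys by metis
  have "hd (xs @ tl ys) = u" using xs walk_nonempty[OF xs(1)] by simp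
  moreover have "last (xs @ tl ys) = w"
    using xs ys walk_nonempty by (cases ys) (auto)
  ultimately have "gdist E u w \<le> length (xs @ tl ys) - 1" using gdist_le w by metis
  then show ?thesis using xs ys by simp
qed

lemma gdist_edge: "E u v \<Longrightarrow> gdist E u v \<le> 1"
  using gdist_le[of E "[u,v]" u v] by simp

lemma first_step:
  assumes "reach E u v" "u \<noteq> v"
  shows "\<exists>v1. E u v1 \<and> gdist E v1 v + 1 \<le> gdist E u v"
proof -
  obtain xs where xs: "walk E xs" "hd xs = u" "last xs = v" "length xs = Suc (gdist E u v)"
    using gdist_ex[OF assms(1)] by auto
  obtain x rest where xr: "xs = x # rest" using walk_nonempty xs by (cases xs) auto
  have "rest \<noteq> []" using xr xs assms(2) by auto
  then obtain v1 rest' where r: "rest = v1 # rest'" by (cases rest) auto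
  have "E u v1" "walk E (v1 # rest')" using xs xr r by auto
  moreover have "last (v1 # rest') = v" using xs xr r by auto
  ultimately have "gdist E v1 v \<le> length (v1 # rest') - 1" using gdist_le by (metis list.sel(1))
  then show ?thesis using \<open>E u v1\<close> xs xr r by auto
qed


context
  fixes V :: "'a set" and E :: "'a \<Rightarrow> 'a \<Rightarrow> bool"
  assumes sg: "simple_graph V E" and cg: "connected_graph V E"
begin

lemma symE: "\<forall>u v. E u v \<longrightarrow> E v u" using sg unfolding simple_graph_def by blast
lemma irrE: "\<not> E u u" using sg unfolding simple_graph_def by blast
lemma finV: "finite V" using sg unfolding simple_graph_def by blast
lemma edgeV: "E u v \<Longrightarrow> v \<in> V" using sg unfolding simple_graph_def by blast

lemma reachV: "u \<in> V \<Longrightarrow> v \<in> V \<Longrightarrow> reach E u v"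
proof -
  assume "u \<in> V" "v \<in> V"
  then show ?thesis using cg unfolding connected_graph_def reach_def by simp
qed

lemma gdist_symV: "u \<in> V \<Longrightarrow> v \<in> V \<Longrightarrow> gdist E u v = gdist E v u"
  by (rule gdist_sym[OF symE reachV])

lemma gdist_triV: "u \<in> V \<Longrightarrow> v \<in> V \<Longrightarrow> w \<in> V \<Longrightarrow> gdist E u w \<le> gdist E u v + gdist E v w"
  by (rule gdist_tri[OF reachV reachV])

lemma gdist_zeroV: "u \<in> V \<Longrightarrow> v \<in> V \<Longrightarrow> gdist E u v = 0 \<Longrightarrow> u = v"
  by (rule gdist_zero[OF reachV])

lemma gdist_edgeV: "E u v \<Longrightarrow> u \<in> V \<Longrightarrow> gdist E u v = 1"
proof -
  assume e: "E u v" "u \<in> V"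
  have "v \<in> V" using edgeV e by blast
  have "u \<noteq> v" using irrE e by blast
  then have "gdist E u v \<noteq> 0" using gdist_zeroV e \<open>v \<in> V\<close> by blast
  then show ?thesis using gdist_edge[of E u v, OF e(1)] by simp
qed

lemma not_compat_q: "q \<in> V \<Longrightarrow> v \<in> V \<Longrightarrow> v \<noteq> q \<Longrightarrow> \<not> compatible E q v q"
proof
  assume "q \<in> V" "v \<in> V" "v \<noteq> q" "compatible E q v q"
  then have "gdist E q v + gdist E v q = gdist E q q"
    unfolding compatible_def on_shortest_path_def by auto
  then have "gdist E v q = 0" using gdist_refl[of E q] by simp
  then show False using gdist_zeroV \<open>q \<in> V\<close> \<open>v \<in> V\<close> \<open>v \<noteq> q\<close> by blast
qed

lemma compat_self: "compatible E q q u \<longleftrightarrow> u = q"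
  unfolding compatible_def by auto

lemma compat_mono:
  assumes "q \<in> V" "v \<in> V" "v \<noteq> q"
  shows "\<exists>v1\<in>V. E q v1 \<and> Ncomp V E q v \<subseteq> Ncomp V E q v1"
proof -
  obtain v1 where v1: "E q v1" "gdist E v1 v + 1 \<le> gdist E q v"
    using first_step[OF reachV[OF assms(1,2)]] assms(3) by metis
  have v1V: "v1 \<in> V" using edgeV v1 by blast
  have qv1: "q \<noteq> v1" using irrE v1 by blast
  have d1: "gdist E v1 q = 1" using gdist_edgeV[OF v1(1) assms(1)] gdist_symV[OF assms(1) v1V] by simp
  have "Ncomp V E q v \<subseteq> Ncomp V E q v1"
  proof
    fix u assume "u \<in> Ncomp V E q v"
    then have uV: "u \<in> V" and c: "gdist E u v + gdist E v q = gdist E u q"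
      unfolding Ncomp_def compatible_def on_shortest_path_def using assms(3) by auto
    have a1: "gdist E u v1 \<le> gdist E u v + gdist E v v1" using gdist_triV uV assms(2) v1V by blast
    have a2: "gdist E v v1 = gdist E v1 v" using gdist_symV assms(2) v1V by blast
    have a3: "gdist E v q = gdist E q v" using gdist_symV assms(1,2) by blast
    have a4: "gdist E u q \<le> gdist E u v1 + gdist E v1 q" using gdist_triV uV assms(1) v1V by blast
    have "gdist E u v1 + gdist E v1 q = gdist E u q" using a1 a2 a3 a4 c v1(2) d1 by linarith
    then show "u \<in> Ncomp V E q v1" using uV qv1
      unfolding Ncomp_def compatible_def on_shortest_path_def by auto
  qed
  then show ?thesis using v1 v1V by blast
qed

lemma correct_compat:
  assumes "q \<in> V" "v \<in> V" "t \<in> V" "correct_reply E t q v"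
  shows "compatible E q v t"
proof (cases "q = t")
  case True then show ?thesis using assms(4) unfolding correct_reply_def compatible_def by auto
next
  case False
  then have e: "E q v" and p: "gdist E q v + gdist E v t = gdist E q t"
    using assms(4) unfolding correct_reply_def on_shortest_path_def by auto
  have "q \<noteq> v" using irrE e by blast
  moreover have "gdist E t v + gdist E v q = gdist E t q"
    using p gdist_symV[OF assms(1) assms(2)] gdist_symV[OF assms(2) assms(3)] gdist_symV[OF assms(1) assms(3)] by simp
  ultimately show ?thesis unfolding compatible_def on_shortest_path_def by auto
qed

lemma lam_ge:
  assumes "v1 \<in> V" "E q v1"
  shows "wsum \<omega> (Ncomp V E q v1) \<le> Lam V E \<omega> q"
proof -
  have "finite {u\<in>V. E q u}" using finV by simp
  then show ?thesis unfolding Lam_def using assms by (intro Max_ge) auto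
qed

lemma reply_bound:
  assumes "q \<in> V" "v \<in> V" "v \<noteq> q" "delta_close V E \<omega> \<delta> q" "\<forall>u\<in>V. 0 \<le> \<omega> u"
  shows "wsum \<omega> (Ncomp V E q v) \<le> (1/2 + \<delta>) * wsum \<omega> V"
proof -
  obtain v1 where v1: "v1 \<in> V" "E q v1" "Ncomp V E q v \<subseteq> Ncomp V E q v1"
    using compat_mono assms by blast
  have "wsum \<omega> (Ncomp V E q v) \<le> wsum \<omega> (Ncomp V E q v1)"
    unfolding wsum_def using v1(3) assms(5) finV
    by (intro sum_mono2) (auto simp: Ncomp_def)
  also have "\<dots> \<le> Lam V E \<omega> q" using lam_ge v1 by blast
  also have "\<dots> \<le> (1/2 + \<delta>) * wsum \<omega> V" using assms(4) unfolding delta_close_def by simp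
  finally show ?thesis .
qed

lemma heavy_query:
  assumes "q \<in> V" "h \<in> V" "delta_close V E \<omega> \<delta> q" "\<forall>u\<in>V. 0 < \<omega> u"
    "\<omega> h > (1/2 + \<delta>) * wsum \<omega> V"
  shows "q = h"
proof (rule ccontr)
  assume "q \<noteq> h"
  have "h \<in> Ncomp V E q h" using assms(2) \<open>q \<noteq> h\<close> gdist_refl
    unfolding Ncomp_def compatible_def on_shortest_path_def by auto
  have "\<omega> h \<le> wsum \<omega> (Ncomp V E q h)"
    unfolding wsum_def using \<open>h \<in> Ncomp V E q h\<close> assms(4) finV
    by (intro member_le_sum) (auto simp: Ncomp_def less_imp_le)
  also have "\<dots> \<le> (1/2 + \<delta>) * wsum \<omega> V"
    using reply_bound[OF assms(1,2) _ assms(3)] \<open>q \<noteq> h\<close> assms(4) by (simp add: less_imp_le)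
  finally show False using assms(5) by simp
qed

end


definition cc :: "real \<Rightarrow> real" where "cc \<eta> = (1 - \<eta>)^2"
definition gm :: "real \<Rightarrow> real" where "gm \<eta> = 1 / (1 - 4*\<eta>)"
definition gg :: "real \<Rightarrow> real" where "gg \<eta> = cc \<eta> * gm \<eta>"
definition y0 :: "real \<Rightarrow> real" where "y0 \<eta> = (2 - \<eta>) / (2 + \<eta>)"
definition lam :: "real \<Rightarrow> real" where "lam \<eta> = ln (gg \<eta>) / ln (gm \<eta>)"
definition kk :: "real \<Rightarrow> real" where "kk \<eta> = (1 + y0 \<eta>) / (y0 \<eta> powr lam \<eta>)"
definition psi :: "real \<Rightarrow> real \<Rightarrow> real" where
  "psi \<eta> Y = (if Y < y0 \<eta> then kk \<eta> * Y powr lam \<eta> else 1 + Y)"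

lemma young1:
  fixes l s :: real
  assumes "0 \<le> l" "l \<le> 1" "0 \<le> s"
  shows "s powr l \<le> l * s + (1 - l)"
proof (cases "s = 0")
  case True
  then have "s powr l = 0" by simp
  moreover have "l * s + (1 - l) = 1 - l" using True by simp
  ultimately show ?thesis using assms by linarith
next
  case False
  then have "s powr l * 1 powr (1 - l) \<le> l * s + (1 - l) * 1"
    using assms by (intro Youngs_inequality_0) auto
  then show ?thesis by simp
qed

lemma ln_upper:
  fixes x :: real assumes "0 \<le> x" "x < 1"
  shows "ln (1 - x) \<le> - x - x^2/2"
proof -
  define f where "f = (\<lambda>x::real. ln (1 - x) + x + x^2/2)"
  have "f x \<le> f 0"
  proof (rule DERIV_nonpos_imp_nonincreasing[OF assms(1)])
    fix y :: real assume y: "0 \<le> y" "y \<le> x"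
    then have y1: "y < 1" using assms by simp
    have "(f has_real_derivative (- (y^2/(1-y)))) (at y)"
      unfolding f_def using y1
      apply (auto intro!: derivative_eq_intros)
      apply (simp add: field_simps power2_eq_square)
      done
    moreover have "0 \<le> y^2/(1-y)" using y1 by simp
    ultimately show "\<exists>d. (f has_real_derivative d) (at y) \<and> d \<le> 0" by (intro exI) auto
  qed
  then show ?thesis by (simp add: f_def)
qed

lemma ln_lower:
  fixes x :: real assumes "0 \<le> x" "x \<le> 1/2"
  shows "- ln (1 - x) \<le> x + x^2/2 + x^3/3 + x^4/4 + 2*x^5/5"
proof -
  define f where "f = (\<lambda>x::real. - ln (1 - x) - x - x^2/2 - x^3/3 - x^4/4 - 2*x^5/5)"
  have "f x \<le> f 0"
  proof (rule DERIV_nonpos_imp_nonincreasing[OF assms(1)])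
    fix y :: real assume y: "0 \<le> y" "y \<le> x"
    then have y1: "y \<le> 1/2" using assms by simp
    have "(f has_real_derivative (y^4 * (2*y - 1) / (1 - y))) (at y)"
      unfolding f_def using y1
      apply (auto intro!: derivative_eq_intros)
      apply (simp add: field_simps)
      apply (simp add: algebra_simps power_def)
      done
    moreover have "y^4 * (2*y - 1) / (1 - y) \<le> 0" using y y1
      by (intro divide_nonpos_pos mult_nonneg_nonpos) auto
    ultimately show "\<exists>d. (f has_real_derivative d) (at y) \<and> d \<le> 0" by (intro exI) auto
  qed
  then show ?thesis by (simp add: f_def)
qed

lemma poly_bound:
  fixes e :: real assumes e0: "0 < e" and e1: "e < 1/8"
  shows "-2*e - e^2 + (1/2 - e) * (4*e + (4*e)^2/2 + (4*e)^3/3 + (4*e)^4/4 + 2*(4*e)^5/5) \<le> -(e^2/8)"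
proof -
  define Q where "Q = -1 + (8/3)*e + (32/3)*e^2 + (704/5)*e^3 - (2048/5)*e^4"
  have eq: "-2*e - e^2 + (1/2 - e) * (4*e + (4*e)^2/2 + (4*e)^3/3 + (4*e)^4/4 + 2*(4*e)^5/5) = e^2 * Q"
    unfolding Q_def by (simp add: power_def field_simps)
  have a: "e^2 \<le> 1/64"
  proof -
    have "e * e \<le> (1/8) * (1/8)" using e0 e1 by (intro mult_mono) auto
    then show ?thesis by (simp add: power2_eq_square)
  qed
  have b: "e^3 \<le> 1/512"
  proof -
    have "e^3 = e * e^2" by (simp add: power_def)
    also have "\<dots> \<le> (1/8) * (1/64)" using a e0 e1 by (intro mult_mono) auto
    finally show ?thesis by simp
  qed
  have c: "0 \<le> e^4" by simp
  have "Q \<le> -1/8" unfolding Q_def using a b c e1 by linarith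
  then have "e^2 * Q \<le> e^2 * (-1/8)" by (intro mult_left_mono) auto
  then show ?thesis using eq by simp
qed
context
  fixes \<eta> :: real
  assumes e0: "0 < \<eta>" and e1: "\<eta> < 1/8"
begin

lemma cc_pos: "0 < cc \<eta>"
  using e0 e1 by (simp add: cc_def)

lemma cc_lt1: "cc \<eta> < 1"
proof -
  have "0 < 1 - \<eta>" "1 - \<eta> < 1" using e0 e1 by auto
  then have "(1 - \<eta>) * (1 - \<eta>) < 1 * 1" by (intro mult_strict_mono') auto
  then show ?thesis by (simp add: cc_def power2_eq_square)
qed

lemma gm_gt1: "1 < gm \<eta>"
  using e0 e1 by (simp add: gm_def)

lemma gm_pos: "0 < gm \<eta>" using gm_gt1 by simp

lemma key4: "1 - 4*\<eta> \<le> (1-\<eta>)^4"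
proof -
  have "(1-\<eta>)^4 = 1 - 4*\<eta> + \<eta>^2 * (6 - 4*\<eta> + \<eta>^2)" by (simp add: power_def algebra_simps)
  moreover have "0 \<le> \<eta>^2 * (6 - 4*\<eta> + \<eta>^2)" using e0 e1 by (intro mult_nonneg_nonneg) auto
  ultimately show ?thesis by linarith
qed

lemma cc_gg: "1 \<le> cc \<eta> * gg \<eta>"
proof -
  have "cc \<eta> * gg \<eta> = (1-\<eta>)^4 / (1 - 4*\<eta>)"
    by (simp add: cc_def gg_def gm_def power_def)
  also have "\<dots> \<ge> 1" using key4 e1 by simp
  finally show ?thesis .
qed

lemma gg_pos: "0 < gg \<eta>" using cc_pos gm_pos by (simp add: gg_def)

lemma gg_gt1: "1 < gg \<eta>"
proof -
  have "1 \<le> cc \<eta> * gg \<eta>" by (rule cc_gg)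
  then show ?thesis using cc_lt1 cc_pos gg_pos
    by (metis less_le_trans mult_less_cancel_right2 not_le)
qed

lemma gg_le_gm: "gg \<eta> \<le> gm \<eta>"
  using cc_lt1 gm_pos by (simp add: gg_def)

lemma gm_powr_lam: "gm \<eta> powr lam \<eta> = gg \<eta>"
proof -
  have "ln (gm \<eta>) > 0" using gm_gt1 by simp
  then have "lam \<eta> * ln (gm \<eta>) = ln (gg \<eta>)" by (simp add: lam_def)
  then show ?thesis using gm_pos gg_pos by (simp add: powr_def)
qed

lemma lam_le1: "lam \<eta> \<le> 1"
proof -
  have "ln (gm \<eta>) > 0" using gm_gt1 by simp
  moreover have "ln (gg \<eta>) \<le> ln (gm \<eta>)" using gg_le_gm gg_pos by simp
  ultimately show ?thesis by (simp add: lam_def)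
qed

lemma lam_ge_half: "1/2 \<le> lam \<eta>"
proof -
  have lg: "ln (gm \<eta>) > 0" using gm_gt1 by simp
  have "gm \<eta> \<le> gg \<eta> * gg \<eta>"
  proof -
    have "gg \<eta> * gg \<eta> = (cc \<eta> * gg \<eta>) * gm \<eta>" by (simp add: gg_def algebra_simps)
    then show ?thesis using cc_gg gm_pos by (metis mult_le_cancel_right1 less_imp_not_less)
  qed
  then have "ln (gm \<eta>) \<le> ln (gg \<eta> * gg \<eta>)" using gm_pos by simp
  also have "\<dots> = 2 * ln (gg \<eta>)" using gg_pos by (simp add: ln_mult)
  finally show ?thesis using lg by (simp add: lam_def field_simps)
qed

lemma lam_pos: "0 < lam \<eta>" using lam_ge_half by simp

lemma y0_pos: "0 < y0 \<eta>" and y0_lt1: "y0 \<eta> < 1"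
  using e0 e1 by (auto simp: y0_def)

lemma kk_ge1: "1 \<le> kk \<eta>"
proof -
  have "y0 \<eta> powr lam \<eta> \<le> 1" using y0_pos y0_lt1 lam_pos by (intro powr_le1) auto
  moreover have "0 < y0 \<eta> powr lam \<eta>" using y0_pos by simp
  ultimately show ?thesis using y0_pos by (simp add: kk_def field_simps)
qed

lemma kk_pos: "0 < kk \<eta>" using kk_ge1 by simp

lemma kk_scale: "0 \<le> s \<Longrightarrow> kk \<eta> * (s * y0 \<eta>) powr lam \<eta> = (1 + y0 \<eta>) * s powr lam \<eta>"
  using y0_pos by (simp add: kk_def powr_mult)

lemma psi_le: assumes "0 \<le> Y" shows "psi \<eta> Y \<le> 1 + Y"
proof (cases "Y < y0 \<eta>")
  case False then show ?thesis by (simp add: psi_def)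
next
  case True
  define s where "s = Y / y0 \<eta>"
  have s0: "0 \<le> s" and s1: "s \<le> 1" using assms True y0_pos by (auto simp: s_def)
  have Ys: "Y = s * y0 \<eta>" using y0_pos by (simp add: s_def)
  have "psi \<eta> Y = (1 + y0 \<eta>) * s powr lam \<eta>" using True Ys kk_scale s0 by (simp add: psi_def)
  also have "\<dots> \<le> (1 + y0 \<eta>) * (lam \<eta> * s + (1 - lam \<eta>))"
    using young1[OF less_imp_le[OF lam_pos] lam_le1 s0] y0_pos by (intro mult_left_mono) auto
  also have "\<dots> \<le> 1 + Y"
  proof -
    have "(1 + y0 \<eta>) * (1/2) \<le> (1 + y0 \<eta>) * lam \<eta>" using lam_ge_half y0_pos
      by (intro mult_left_mono) auto
    moreover have "(1 + y0 \<eta>) * (1/2) = 1/2 + y0 \<eta> / 2" by simp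
    ultimately have "(1 + y0 \<eta>) * lam \<eta> \<ge> y0 \<eta>" using y0_lt1 by linarith
    then have "(s - 1) * ((1 + y0 \<eta>) * lam \<eta> - y0 \<eta>) \<le> 0" using s1
      by (intro mult_nonpos_nonneg) auto
    then show ?thesis using Ys by (simp add: algebra_simps)
  qed
  finally show ?thesis .
qed

lemma chord:
  assumes "1 \<le> s" "s \<le> gm \<eta>"
  shows "1 + (s - 1) / (gm \<eta> - 1) * (gg \<eta> - 1) \<le> s powr lam \<eta>"
proof -
  define th where "th = (s - 1) / (gm \<eta> - 1)"
  have g1: "gm \<eta> - 1 > 0" using gm_gt1 by simp
  have th0: "0 \<le> th" and th1: "th \<le> 1" using assms g1 by (auto simp: th_def field_simps)
  have "th * (gm \<eta> - 1) = s - 1" using g1 by (simp add: th_def)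
  then have sdef: "s = (1 - th) + th * gm \<eta>" by (simp add: algebra_simps)
  have sp: "0 < s" using assms by simp
  have l0: "0 \<le> lam \<eta>" using lam_pos by simp
  have a: "(1/s) powr lam \<eta> \<le> lam \<eta> * (1/s) + (1 - lam \<eta>)"
    using young1[OF l0 lam_le1, of "1/s"] sp by simp
  have b: "(gm \<eta>/s) powr lam \<eta> \<le> lam \<eta> * (gm \<eta>/s) + (1 - lam \<eta>)"
    using young1[OF l0 lam_le1, of "gm \<eta>/s"] sp gm_pos by simp
  have "(1 - th) * (1/s) powr lam \<eta> + th * (gm \<eta>/s) powr lam \<eta>
        \<le> (1 - th) * (lam \<eta> * (1/s) + (1 - lam \<eta>)) + th * (lam \<eta> * (gm \<eta>/s) + (1 - lam \<eta>))"
    using a b th0 th1 by (intro add_mono mult_left_mono) auto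
  also have "\<dots> = lam \<eta> * (((1 - th) + th * gm \<eta>) / s) + (1 - lam \<eta>)"
    using sp by (simp add: field_simps)
  also have "\<dots> = 1" using sdef sp by simp
  finally have c: "(1 - th) * (1/s) powr lam \<eta> + th * (gm \<eta>/s) powr lam \<eta> \<le> 1" .
  have "(1/s) powr lam \<eta> = 1 / s powr lam \<eta>" using sp by (simp add: powr_divide)
  moreover have "(gm \<eta>/s) powr lam \<eta> = gg \<eta> / s powr lam \<eta>"
    using sp gm_pos by (simp add: powr_divide gm_powr_lam)
  ultimately have "((1 - th) + th * gg \<eta>) / s powr lam \<eta> \<le> 1"
    using c by (simp add: add_divide_distrib)
  then have "(1 - th) + th * gg \<eta> \<le> s powr lam \<eta>" using sp by (simp add: divide_le_eq)
  moreover have "1 + (s - 1) / (gm \<eta> - 1) * (gg \<eta> - 1) = (1 - th) + th * gg \<eta>"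
    unfolding th_def[symmetric] by (simp add: algebra_simps)
  ultimately show ?thesis by simp
qed

lemma psi_pow:
  assumes "0 \<le> Y" "Y \<le> gm \<eta> * y0 \<eta>"
  shows "psi \<eta> Y \<le> kk \<eta> * Y powr lam \<eta>"
proof (cases "Y < y0 \<eta>")
  case True then show ?thesis by (simp add: psi_def)
next
  case False
  define s where "s = Y / y0 \<eta>"
  have s1: "1 \<le> s" and s2: "s \<le> gm \<eta>" using assms False y0_pos by (auto simp: s_def field_simps)
  have Ys: "Y = s * y0 \<eta>" using y0_pos by (simp add: s_def)
  have g1: "gm \<eta> - 1 > 0" using gm_gt1 by simp
  have num: "y0 \<eta> * (gm \<eta> - 1) \<le> (1 + y0 \<eta>) * (gg \<eta> - 1)"
  proof -
    have d1: "1 - 4*\<eta> > 0" "2 + \<eta> > 0" using e0 e1 by auto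
    have y1: "1 + y0 \<eta> = 4 / (2 + \<eta>)" using d1 by (simp add: y0_def field_simps)
    have g1': "gg \<eta> - 1 = \<eta> * (2 + \<eta>) / (1 - 4*\<eta>)"
    proof -
      have "gg \<eta> = (1 - \<eta>)^2 / (1 - 4*\<eta>)" by (simp add: gg_def cc_def gm_def)
      then have "gg \<eta> - 1 = ((1 - \<eta>)^2 - (1 - 4*\<eta>)) / (1 - 4*\<eta>)" using d1 by (simp add: field_simps)
      also have "(1 - \<eta>)^2 - (1 - 4*\<eta>) = \<eta> * (2 + \<eta>)" by (simp add: power2_eq_square algebra_simps)
      finally show ?thesis .
    qed
    have A: "(1 + y0 \<eta>) * (gg \<eta> - 1) = 4*\<eta> / (1 - 4*\<eta>)"
      unfolding y1 g1' using d1 by (simp add: divide_simps)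
    have B: "y0 \<eta> * (gm \<eta> - 1) = y0 \<eta> * (4*\<eta> / (1 - 4*\<eta>))"
      using e1 by (simp add: gm_def field_simps)
    have "y0 \<eta> * (4*\<eta> / (1 - 4*\<eta>)) \<le> 4*\<eta> / (1 - 4*\<eta>)"
      using y0_lt1 y0_pos e0 e1 by (intro mult_left_le_one_le) auto
    then show ?thesis using A B by simp
  qed
  have "psi \<eta> Y = 1 + y0 \<eta> + y0 \<eta> * (s - 1)" using False Ys by (simp add: psi_def algebra_simps)
  also have "\<dots> \<le> (1 + y0 \<eta>) + (1 + y0 \<eta>) * ((s - 1) / (gm \<eta> - 1) * (gg \<eta> - 1))"
  proof -
    have "y0 \<eta> * (s - 1) = (s - 1) / (gm \<eta> - 1) * (y0 \<eta> * (gm \<eta> - 1))" using g1 by simp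
    also have "\<dots> \<le> (s - 1) / (gm \<eta> - 1) * ((1 + y0 \<eta>) * (gg \<eta> - 1))"
      using num s1 g1 by (intro mult_left_mono) auto
    also have "\<dots> = (1 + y0 \<eta>) * ((s - 1) / (gm \<eta> - 1) * (gg \<eta> - 1))" by simp
    finally show ?thesis by linarith
  qed
  also have "\<dots> = (1 + y0 \<eta>) * (1 + (s - 1) / (gm \<eta> - 1) * (gg \<eta> - 1))" by (simp add: algebra_simps)
  also have "\<dots> \<le> (1 + y0 \<eta>) * s powr lam \<eta>"
    using chord[OF s1 s2] y0_pos by (intro mult_left_mono) auto
  also have "\<dots> = kk \<eta> * Y powr lam \<eta>" using kk_scale s1 Ys by simp
  finally show ?thesis .
qed

lemma psi_ge: assumes "0 \<le> Y" "Y < y0 \<eta>" shows "Y \<le> psi \<eta> Y"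
proof -
  have "Y powr 1 \<le> Y powr lam \<eta>"
    using assms y0_lt1 lam_le1 by (intro powr_mono') auto
  then have "Y \<le> Y powr lam \<eta>" using assms by (cases "Y = 0") auto
  also have "\<dots> \<le> kk \<eta> * Y powr lam \<eta>" using kk_ge1 by (simp add: mult_le_cancel_right1)
  finally show ?thesis using assms by (simp add: psi_def)
qed


definition Fp :: "real \<Rightarrow> 'a set \<Rightarrow> ('a \<Rightarrow> real) \<Rightarrow> 'a \<Rightarrow> 'a \<Rightarrow> real" where
  "Fp e V w t p = w p / w t * psi e ((sum w V - w p) / w p)"

definition Phi :: "real \<Rightarrow> 'a set \<Rightarrow> ('a \<Rightarrow> real) \<Rightarrow> 'a \<Rightarrow> real" where
  "Phi e V w t = Min ((\<lambda>p. Fp e V w t p) ` V)"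

lemma heavy_iff:
  assumes "0 < wp" "wp \<le> W"
  shows "(1/2 + \<eta>/4) * W < wp \<longleftrightarrow> (W - wp) / wp < y0 \<eta>"
proof -
  have "(W - wp) / wp < y0 \<eta> \<longleftrightarrow> (W - wp) * (2 + \<eta>) < (2 - \<eta>) * wp"
    using assms e0 by (simp add: y0_def divide_simps)
  also have "\<dots> \<longleftrightarrow> (1/2 + \<eta>/4) * W < wp" by (simp add: field_simps)
  finally show ?thesis by simp
qed

lemma sum_pos_ge:
  fixes w :: "'a \<Rightarrow> real"
  assumes "finite V" "p \<in> V" "\<forall>u\<in>V. 0 < w u"
  shows "w p \<le> sum w V"
  using assms by (intro member_le_sum) (auto simp: less_imp_le)

lemma Fp_le:
  fixes w :: "'a \<Rightarrow> real"
  assumes "finite V" "p \<in> V" "t \<in> V" "\<forall>u\<in>V. 0 < w u"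
  shows "Fp \<eta> V w t p \<le> sum w V / w t"
proof -
  have wp: "0 < w p" "0 < w t" using assms by auto
  have Y0: "0 \<le> (sum w V - w p) / w p" using sum_pos_ge[OF assms(1,2,4)] wp by simp
  have "Fp \<eta> V w t p \<le> w p / w t * (1 + (sum w V - w p) / w p)"
    unfolding Fp_def using psi_le[OF Y0] wp by (intro mult_left_mono) auto
  also have "\<dots> = sum w V / w t" using wp by (simp add: field_simps)
  finally show ?thesis .
qed

lemma Fp_nonheavy:
  assumes "finite V" "p \<in> V" "\<forall>u\<in>V. 0 < w u" "\<not> (1/2 + \<eta>/4) * sum w V < w p"
  shows "Fp \<eta> V w t p = sum w V / w t"
proof -
  have wp: "0 < w p" using assms by auto
  have "\<not> (sum w V - w p) / w p < y0 \<eta>"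
    using heavy_iff[OF wp sum_pos_ge[OF assms(1,2,3)]] assms(4) by simp
  then show ?thesis unfolding Fp_def psi_def using wp by (simp add: field_simps)
qed

lemma Fp_heavy:
  assumes "finite V" "p \<in> V" "\<forall>u\<in>V. 0 < w u" "(1/2 + \<eta>/4) * sum w V < w p"
  shows "Fp \<eta> V w t p = w p / w t * (kk \<eta> * ((sum w V - w p) / w p) powr lam \<eta>)"
proof -
  have wp: "0 < w p" using assms by auto
  have "(sum w V - w p) / w p < y0 \<eta>"
    using heavy_iff[OF wp sum_pos_ge[OF assms(1,2,3)]] assms(4) by simp
  then show ?thesis unfolding Fp_def psi_def by simp
qed

lemma Phi_le: "finite V \<Longrightarrow> p \<in> V \<Longrightarrow> Phi \<eta> V w t \<le> Fp \<eta> V w t p"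
  unfolding Phi_def by (intro Min_le) auto

lemma Phi_ge: "finite V \<Longrightarrow> V \<noteq> {} \<Longrightarrow> (\<forall>p\<in>V. x \<le> Fp \<eta> V w t p) \<Longrightarrow> x \<le> Phi \<eta> V w t"
  unfolding Phi_def by (subst Min_ge_iff) auto

lemma one_heavy:
  fixes w :: "'a \<Rightarrow> real"
  assumes "finite V" "p \<in> V" "p' \<in> V" "\<forall>u\<in>V. 0 < w u"
    "(1/2 + \<eta>/4) * sum w V < w p" "(1/2 + \<eta>/4) * sum w V < w p'"
  shows "p = p'"
proof (rule ccontr)
  assume "p \<noteq> p'"
  then have "w p + w p' = sum w {p, p'}" by simp
  also have "\<dots> \<le> sum w V" using assms by (intro sum_mono2) (auto simp: less_imp_le)
  finally have s: "w p + w p' \<le> sum w V" .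
  have "0 < sum w V" using sum_pos_ge[OF assms(1,2,4)] assms(2,4) by fastforce
  then have "0 \<le> \<eta> * sum w V" using e0 by simp
  then show False using assms(5,6) s by (simp add: algebra_simps)
qed

lemma lb_step:
  fixes V :: "'a set" and w w' :: "'a \<Rightarrow> real"
  assumes fin: "finite V" and tV: "t \<in> V" and qV: "q \<in> V" and pos: "\<forall>u\<in>V. 0 < w u"
    and upd: "\<forall>u\<in>V. w' u = (if u \<in> C then w u else w u / gm \<eta>)"
    and reply: "C \<inter> V = {q} \<or> (q \<notin> C \<and> sum w (C \<inter> V) \<le> (1/2 + \<eta>/4) * sum w V)"
    and hq: "\<forall>h\<in>V. (1/2 + \<eta>/4) * sum w V < w h \<longrightarrow> h = q"
  shows "Phi \<eta> V w' t \<le> (if t \<in> C then cc \<eta> else gg \<eta>) * Phi \<eta> V w t"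
proof -
  define W where "W = sum w V"
  define W' where "W' = sum w' V"
  define f where "f = (if t \<in> C then cc \<eta> else gg \<eta>)"
  have g1: "1 < gm \<eta>" by (rule gm_gt1)
  have pos': "\<forall>u\<in>V. 0 < w' u" using upd pos gm_pos by auto
  have le': "\<forall>u\<in>V. w' u \<le> w u" using upd pos g1 by (auto simp: divide_le_eq)
  have a0: "0 < w t" using pos tV by auto
  have at: "w' t = (if t \<in> C then w t else w t / gm \<eta>)" using upd tV by auto
  have Vne: "V \<noteq> {}" using tV by auto
  show ?thesis
  proof (cases "\<exists>h\<in>V. (1/2 + \<eta>/4) * W < w h")
    case False
    have PhiW: "W / w t \<le> Phi \<eta> V w t"
      using Fp_nonheavy[OF fin _ pos] False by (intro Phi_ge[OF fin Vne]) (auto simp: W_def)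
    define S where "S = sum w (C \<inter> V)"
    have SW: "S \<le> (1/2 + \<eta>/4) * W"
    proof (cases "C \<inter> V = {q}")
      case True
      then have "S = w q" by (simp add: S_def)
      then show ?thesis using False qV by auto
    next
      case False
      then show ?thesis using reply by (simp add: S_def W_def)
    qed
    have "W' = sum w' (C \<inter> V) + sum w' (V - C)"
      using fin by (simp add: W'_def Int_commute sum.Int_Diff[of V w' C])
    also have "sum w' (C \<inter> V) = S" unfolding S_def using upd by (intro sum.cong) auto
    also have "sum w' (V - C) = sum w (V - C) / gm \<eta>"
      using upd by (simp add: sum_divide_distrib)
    also have "sum w (V - C) = W - S"
      using fin by (simp add: W_def S_def Int_commute sum.Int_Diff[of V w C])
    finally have W'eq: "W' = S + (W - S) / gm \<eta>" .
    have W'le: "W' \<le> cc \<eta> * W"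
    proof -
      have inv: "1 / gm \<eta> = 1 - 4*\<eta>" by (simp add: gm_def)
      have "(W - S) / gm \<eta> = (W - S) * (1 - 4*\<eta>)" by (simp add: gm_def)
      then have "W' = S * (4*\<eta>) + W * (1 - 4*\<eta>)" using W'eq by (simp add: algebra_simps)
      also have "\<dots> \<le> (1/2 + \<eta>/4) * W * (4*\<eta>) + W * (1 - 4*\<eta>)"
        using SW e0 by (intro add_right_mono mult_right_mono) auto
      also have "\<dots> = cc \<eta> * W" by (simp add: cc_def power2_eq_square algebra_simps)
      finally show ?thesis .
    qed
    have "Phi \<eta> V w' t \<le> Fp \<eta> V w' t t" by (rule Phi_le[OF fin tV])
    also have "\<dots> \<le> W' / w' t" unfolding W'_def by (rule Fp_le[OF fin tV tV pos'])
    also have "\<dots> \<le> f * (W / w t)"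
    proof (cases "t \<in> C")
      case True
      then show ?thesis using at W'le a0 by (simp add: f_def divide_right_mono)
    next
      case False
      then have "W' / w' t = W' * gm \<eta> / w t" using at by simp
      also have "\<dots> \<le> cc \<eta> * W * gm \<eta> / w t"
        using W'le a0 gm_pos by (intro divide_right_mono mult_right_mono) auto
      also have "\<dots> = f * (W / w t)" using False by (simp add: f_def gg_def)
      finally show ?thesis .
    qed
    also have "\<dots> \<le> f * Phi \<eta> V w t"
      using PhiW by (intro mult_left_mono) (auto simp: f_def less_imp_le[OF cc_pos] less_imp_le[OF gg_pos])
    finally show ?thesis by (simp add: f_def)
  next
    case True
    then obtain h where hV: "h \<in> V" and hh: "(1/2 + \<eta>/4) * W < w h" by blast
    have hq': "h = q" using hq hV hh by (auto simp: W_def)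
    have wh: "0 < w h" using pos hV by auto
    define Y where "Y = (W - w h) / w h"
    define Y' where "Y' = (W' - w' h) / w' h"
    have Fh: "Fp \<eta> V w t h = w h / w t * (kk \<eta> * Y powr lam \<eta>)"
      using Fp_heavy[OF fin hV pos] hh by (simp add: W_def Y_def)
    have Yl: "Y < y0 \<eta>" using heavy_iff[OF wh] hh sum_pos_ge[OF fin hV pos] by (simp add: Y_def W_def)
    have Y0: "0 \<le> Y" using sum_pos_ge[OF fin hV pos] wh by (simp add: Y_def W_def)
    have PhiF: "Fp \<eta> V w t h \<le> Phi \<eta> V w t"
    proof (intro Phi_ge[OF fin Vne] ballI)
      fix p assume pV: "p \<in> V"
      show "Fp \<eta> V w t h \<le> Fp \<eta> V w t p"
      proof (cases "p = h")
        case True then show ?thesis by simp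
      next
        case False
        then have "\<not> (1/2 + \<eta>/4) * W < w p" using one_heavy[OF fin pV hV pos] hh by (auto simp: W_def)
        then have "Fp \<eta> V w t p = W / w t" using Fp_nonheavy[OF fin pV pos] by (simp add: W_def)
        then show ?thesis using Fp_le[OF fin hV tV pos] by (simp add: W_def)
      qed
    qed
    have Fnn: "0 \<le> Fp \<eta> V w t h" using Fh kk_pos wh a0 by simp
    have R: "W - w h = sum w (V - {h})" using fin hV by (simp add: W_def sum_diff1)
    have R': "W' - w' h = sum w' (V - {h})" using fin hV by (simp add: W'_def sum_diff1)
    have wh': "0 < w' h" using pos' hV by auto
    have "0 \<le> sum w' (V - {h})" using pos' by (intro sum_nonneg) (auto simp: less_imp_le)
    then have Y'0: "0 \<le> Y'" unfolding Y'_def using R' wh' by simp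
    have key: "w' h / w' t * (kk \<eta> * Y' powr lam \<eta>) \<le> f * Fp \<eta> V w t h \<and> Y' \<le> gm \<eta> * y0 \<eta>"
    proof (cases "C \<inter> V = {q}")
      case True
      then have hC: "h \<in> C" using hq' hV by auto
      have wh'e: "w' h = w h" using upd hV hC by auto
      have "\<forall>u\<in>V - {h}. u \<notin> C" using True hq' by blast
      then have "sum w' (V - {h}) = sum w (V - {h}) / gm \<eta>"
        using upd by (auto simp: sum_divide_distrib intro!: sum.cong)
      then have Y'e: "Y' = Y / gm \<eta>" unfolding Y'_def Y_def using R R' wh'e by simp
      have pw: "Y' powr lam \<eta> = Y powr lam \<eta> / gg \<eta>"
        using Y'e Y0 gm_pos by (simp add: powr_divide gm_powr_lam)
      have yb: "Y' \<le> gm \<eta> * y0 \<eta>"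
      proof -
        have "Y' \<le> Y" using Y'e Y0 g1 by (simp add: divide_le_eq) (smt (verit) mult_le_cancel_left1)
        also have "\<dots> \<le> y0 \<eta>" using Yl by simp
        also have "\<dots> \<le> gm \<eta> * y0 \<eta>" using g1 y0_pos by simp
        finally show ?thesis .
      qed
      show ?thesis
      proof (cases "t = h")
        case True
        then have "t \<in> C" using hC by simp
        then have "w' t = w t" using at by simp
        then have "w' h / w' t * (kk \<eta> * Y' powr lam \<eta>) = Fp \<eta> V w t h / gg \<eta>"
          using Fh wh'e pw by simp
        also have "\<dots> \<le> cc \<eta> * Fp \<eta> V w t h"
        proof -
          have "1 / gg \<eta> \<le> cc \<eta>" using cc_gg gg_pos by (simp add: divide_le_eq mult.commute)
          then have "1 / gg \<eta> * Fp \<eta> V w t h \<le> cc \<eta> * Fp \<eta> V w t h"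
            using Fnn by (intro mult_right_mono) auto
          then show ?thesis by simp
        qed
        finally show ?thesis using yb \<open>t \<in> C\<close> by (simp add: f_def)
      next
        case False
        then have "t \<notin> C" using True tV hq' by auto
        then have wt': "w' t = w t / gm \<eta>" using at by simp
        have "w' h / w' t * (kk \<eta> * Y' powr lam \<eta>) = Fp \<eta> V w t h * (gm \<eta> / gg \<eta>)"
          unfolding wt' using Fh wh'e pw gm_pos by (simp add: field_simps)
        also have "\<dots> \<le> Fp \<eta> V w t h * gg \<eta>"
        proof -
          have "gm \<eta> / gg \<eta> \<le> gg \<eta>"
          proof -
            have "gm \<eta> / gg \<eta> = 1 / cc \<eta>" using cc_pos gm_pos by (simp add: gg_def)
            also have "\<dots> \<le> gg \<eta>" using cc_gg cc_pos by (simp add: divide_le_eq mult.commute)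
            finally show ?thesis .
          qed
          then show ?thesis using Fnn by (intro mult_left_mono) auto
        qed
        finally show ?thesis using yb \<open>t \<notin> C\<close> by (simp add: f_def mult.commute)
      qed
    next
      case False
      then have qC: "q \<notin> C" using reply by auto
      then have hC: "h \<notin> C" using hq' by simp
      have wh'e: "w' h = w h / gm \<eta>" using upd hV hC by auto
      have "sum w' (V - {h}) \<le> sum w (V - {h})" using le' by (intro sum_mono) auto
      then have "W' - w' h \<le> W - w h" using R R' by simp
      then have rr: "(W' - w' h) / w h \<le> (W - w h) / w h" using wh by (simp add: divide_right_mono)
      have "Y' = gm \<eta> * ((W' - w' h) / w h)" unfolding Y'_def
        using wh'e gm_pos wh by (simp add: divide_divide_eq_right)
      also have "\<dots> \<le> gm \<eta> * Y" unfolding Y_def using rr gm_pos by (intro mult_left_mono) auto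
      finally have Y'le: "Y' \<le> gm \<eta> * Y" .
      have pw: "Y' powr lam \<eta> \<le> gg \<eta> * Y powr lam \<eta>"
      proof -
        have "Y' powr lam \<eta> \<le> (gm \<eta> * Y) powr lam \<eta>"
          using Y'le Y'0 lam_pos by (intro powr_mono2) auto
        also have "\<dots> = gg \<eta> * Y powr lam \<eta>" using Y0 gm_pos by (simp add: powr_mult gm_powr_lam)
        finally show ?thesis .
      qed
      have yb: "Y' \<le> gm \<eta> * y0 \<eta>" using Y'le Yl gm_pos by (smt (verit) mult_left_mono)
      have base: "w' h / w' t * (kk \<eta> * Y' powr lam \<eta>) \<le> w' h / w' t * (kk \<eta> * (gg \<eta> * Y powr lam \<eta>))"
        using pw kk_pos wh' pos' tV by (intro mult_left_mono) auto
      show ?thesis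
      proof (cases "t \<in> C")
        case True
        then have wt': "w' t = w t" using at by simp
        have "w' h / w' t * (kk \<eta> * (gg \<eta> * Y powr lam \<eta>)) = (gg \<eta> / gm \<eta>) * Fp \<eta> V w t h"
          unfolding wt' wh'e using Fh gm_pos by (simp add: field_simps)
        also have "gg \<eta> / gm \<eta> = cc \<eta>" using gm_pos by (simp add: gg_def)
        finally show ?thesis using base yb True by (simp add: f_def)
      next
        case False
        then have wt': "w' t = w t / gm \<eta>" using at by simp
        have "w' h / w' t * (kk \<eta> * (gg \<eta> * Y powr lam \<eta>)) = gg \<eta> * Fp \<eta> V w t h"
          unfolding wt' wh'e using Fh gm_pos by (simp add: field_simps)
        then show ?thesis using base yb False by (simp add: f_def)
      qed
    qed
    have "Phi \<eta> V w' t \<le> Fp \<eta> V w' t h" by (rule Phi_le[OF fin hV])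
    also have "\<dots> \<le> w' h / w' t * (kk \<eta> * Y' powr lam \<eta>)"
      unfolding Fp_def Y'_def[symmetric] W'_def[symmetric]
      using psi_pow[OF Y'0] key wh' pos' tV by (intro mult_left_mono) auto
    also have "\<dots> \<le> f * Fp \<eta> V w t h" using key by simp
    also have "\<dots> \<le> f * Phi \<eta> V w t"
      using PhiF by (intro mult_left_mono) (auto simp: f_def less_imp_le[OF cc_pos] less_imp_le[OF gg_pos])
    finally show ?thesis by (simp add: f_def)
  qed
qed


lemma psi_ge_all: assumes "0 \<le> Y" shows "Y \<le> psi \<eta> Y"
proof (cases "Y < y0 \<eta>")
  case True then show ?thesis using psi_ge assms by blast
next
  case False then show ?thesis by (simp add: psi_def)
qed

lemma Phi_ge1:
  fixes w :: "'a \<Rightarrow> real"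
  assumes fin: "finite V" and tV: "t \<in> V" and uV: "u \<in> V" and ut: "u \<noteq> t"
    and pos: "\<forall>v\<in>V. 0 < w v" and le: "w t \<le> w u"
  shows "1 \<le> Phi \<eta> V w t"
proof (intro Phi_ge[OF fin] ballI)
  show "V \<noteq> {}" using tV by auto
next
  fix p assume pV: "p \<in> V"
  have a0: "0 < w t" using pos tV by auto
  have wp: "0 < w p" using pos pV by auto
  have "w t + w u = sum w {t, u}" using ut by simp
  also have "\<dots> \<le> sum w V" using fin tV uV pos by (intro sum_mono2) (auto simp: less_imp_le)
  finally have W2: "w t + w u \<le> sum w V" .
  show "1 \<le> Fp \<eta> V w t p"
  proof (cases "p = t")
    case True
    have Y1: "1 \<le> (sum w V - w t) / w t" using W2 le a0 by (simp add: le_divide_eq)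
    then have "\<not> (sum w V - w t) / w t < y0 \<eta>" using y0_lt1 by simp
    then have "Fp \<eta> V w t p = 1 + (sum w V - w t) / w t" using True a0 by (simp add: Fp_def psi_def)
    then show ?thesis using Y1 by simp
  next
    case False
    have "w t \<le> sum w (V - {p})" using False tV fin pos by (intro member_le_sum) (auto simp: less_imp_le)
    also have "sum w (V - {p}) = sum w V - w p" using fin pV by (simp add: sum_diff1)
    finally have R: "w t \<le> sum w V - w p" .
    have Y0: "0 \<le> (sum w V - w p) / w p" using R a0 wp by simp
    have "(sum w V - w p) / w t = w p / w t * ((sum w V - w p) / w p)" using wp by simp
    also have "\<dots> \<le> Fp \<eta> V w t p" unfolding Fp_def using psi_ge_all[OF Y0] wp a0
      by (intro mult_left_mono) auto
    finally have F: "(sum w V - w p) / w t \<le> Fp \<eta> V w t p" .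
    have "1 \<le> (sum w V - w p) / w t" using R a0 by (simp add: le_divide_eq)
    then show ?thesis using F by linarith
  qed
qed

lemma final_numeric:
  fixes n :: real and T l :: nat
  assumes n2: "2 \<le> n" and T: "10 * log 2 n / \<eta>^2 \<le> real T" and l: "real l \<le> (1/2 - \<eta>) * real T"
  shows "n * cc \<eta> ^ T * gm \<eta> ^ l < 1"
proof -
  define B where "B = 4*\<eta> + (4*\<eta>)^2/2 + (4*\<eta>)^3/3 + (4*\<eta>)^4/4 + 2*(4*\<eta>)^5/5"
  have lc: "ln (cc \<eta>) \<le> -2*\<eta> - \<eta>^2"
  proof -
    have "ln (cc \<eta>) = 2 * ln (1 - \<eta>)" using e0 e1 by (simp add: cc_def ln_realpow)
    also have "\<dots> \<le> 2 * (- \<eta> - \<eta>^2/2)" using ln_upper[of \<eta>] e0 e1 by simp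
    finally show ?thesis by simp
  qed
  have lg0: "0 < ln (gm \<eta>)" using gm_gt1 by simp
  have lg: "ln (gm \<eta>) \<le> B"
  proof -
    have "ln (gm \<eta>) = - ln (1 - 4*\<eta>)" using e0 e1 by (simp add: gm_def ln_div)
    also have "\<dots> \<le> B" unfolding B_def using ln_lower[of "4*\<eta>"] e0 e1 by simp
    finally show ?thesis .
  qed
  have n0: "0 < n" using n2 by simp
  have lnn: "0 < ln n" using n2 by simp
  have "ln (n * cc \<eta> ^ T * gm \<eta> ^ l) = ln n + T * ln (cc \<eta>) + l * ln (gm \<eta>)"
    using n0 cc_pos gm_pos by (simp add: ln_mult ln_realpow)
  also have "\<dots> \<le> ln n + T * (-2*\<eta> - \<eta>^2) + ((1/2 - \<eta>) * T) * B"
  proof -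
    have "T * ln (cc \<eta>) \<le> T * (-2*\<eta> - \<eta>^2)" using lc by (intro mult_left_mono) auto
    moreover have "l * ln (gm \<eta>) \<le> ((1/2 - \<eta>) * T) * ln (gm \<eta>)"
      using l lg0 by (intro mult_right_mono) auto
    moreover have "((1/2 - \<eta>) * T) * ln (gm \<eta>) \<le> ((1/2 - \<eta>) * T) * B"
      using lg e1 by (intro mult_left_mono) auto
    ultimately show ?thesis by linarith
  qed
  also have "\<dots> = ln n + T * (-2*\<eta> - \<eta>^2 + (1/2 - \<eta>) * B)" by (simp add: algebra_simps)
  also have "\<dots> \<le> ln n + T * (-(\<eta>^2/8))"
    using poly_bound[OF e0 e1] unfolding B_def by (intro add_left_mono mult_left_mono) auto
  also have "\<dots> < 0"
  proof -
    have "10 * log 2 n \<le> real T * \<eta>^2" using T e0 by (simp add: divide_le_eq)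
    moreover have "log 2 n = ln n / ln 2" by (simp add: log_def)
    moreover have "ln n < ln n / ln 2"
      using lnn ln_2_less_1 by (simp add: less_divide_eq)
    ultimately have "10 * ln n \<le> real T * \<eta>^2" using lnn by (smt (verit))
    then have "ln n * 8 < real T * \<eta>^2" using lnn by linarith
    then show ?thesis by simp
  qed
  finally have "ln (n * cc \<eta> ^ T * gm \<eta> ^ l) < 0" .
  moreover have "0 < n * cc \<eta> ^ T * gm \<eta> ^ l" using n0 cc_pos gm_pos by simp
  ultimately show ?thesis by (simp add: ln_less_zero_iff)
qed

end


theorem lemma8:
  fixes V :: "'a set" and E :: "'a \<Rightarrow> 'a \<Rightarrow> bool" and t :: 'a
    and \<eta> :: real and qs vs :: "'a list"
  assumes "simple_graph V E" and "connected_graph V E" and "t \<in> V"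
    and "0 < \<eta>" and "\<eta> < 1/8"
    and "LB_execution V E (\<eta>/4) (1 / (1 - 4*\<eta>))
           (nat \<lceil>10 * log 2 (real (card V)) / \<eta>^2\<rceil>) qs vs"
    and "real (num_errors E t (nat \<lceil>10 * log 2 (real (card V)) / \<eta>^2\<rceil>) qs vs)
           \<le> (1/2 - \<eta>) * real (nat \<lceil>10 * log 2 (real (card V)) / \<eta>^2\<rceil>)"
  shows "\<forall>u\<in>V. u \<noteq> t \<longrightarrow>
           ctr E qs vs (nat \<lceil>10 * log 2 (real (card V)) / \<eta>^2\<rceil>) t
           < ctr E qs vs (nat \<lceil>10 * log 2 (real (card V)) / \<eta>^2\<rceil>) u"
proof -
  note sg = assms(1) and cg = assms(2) and tV = assms(3) and e0 = assms(4) and e1 = assms(5)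
  define T where "T = nat \<lceil>10 * log 2 (real (card V)) / \<eta>^2\<rceil>"
  define n where "n = card V"
  define \<Gamma> where "\<Gamma> = 1 / (1 - 4*\<eta>)"
  have Ggm: "\<Gamma> = gm \<eta>" by (simp add: \<Gamma>_def gm_def)
  have G1: "1 < \<Gamma>" using gm_gt1[OF e0 e1] Ggm by simp
  have fin: "finite V" using finV[OF sg cg] .
  have exe: "LB_execution V E (\<eta>/4) \<Gamma> T qs vs" using assms(6) by (simp add: T_def \<Gamma>_def)
  then have lq: "length qs = T" and lv: "length vs = T" and sq: "set qs \<subseteq> V" and sv: "set vs \<subseteq> V"
    and dc: "\<forall>i<T. delta_close V E (wt n \<Gamma> E qs vs i) (\<eta>/4) (qs ! i)"
    unfolding LB_execution_def n_def by auto
  have nerr: "real (num_errors E t T qs vs) \<le> (1/2 - \<eta>) * real T" using assms(7) by (simp add: T_def)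
  define w where "w i = wt n \<Gamma> E qs vs i" for i
  have n1: "1 \<le> n" using fin tV by (simp add: n_def Suc_le_eq card_gt_0_iff) blast
  have wpos: "0 < w i u" for i u using n1 G1 by (simp add: w_def wt_def)
  have ctr_Suc: "ctr E qs vs (Suc i) u = ctr E qs vs i u + (if compatible E (qs!i) (vs!i) u then 0 else 1)" for i u
  proof (cases "compatible E (qs!i) (vs!i) u")
    case True
    then have "{j. j < Suc i \<and> \<not> compatible E (qs ! j) (vs ! j) u} = {j. j < i \<and> \<not> compatible E (qs ! j) (vs ! j) u}"
      by (auto simp: less_Suc_eq)
    then show ?thesis using True by (simp add: ctr_def)
  next
    case False
    then have "{j. j < Suc i \<and> \<not> compatible E (qs ! j) (vs ! j) u} = insert i {j. j < i \<and> \<not> compatible E (qs ! j) (vs ! j) u}"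
      by (auto simp: less_Suc_eq)
    then show ?thesis using False by (simp add: ctr_def)
  qed
  have w_Suc: "w (Suc i) u = (if compatible E (qs!i) (vs!i) u then w i u else w i u / \<Gamma>)" for i u
    using G1 by (simp add: w_def wt_def ctr_Suc)
  have chain: "i \<le> T \<Longrightarrow> Phi \<eta> V (w i) t \<le> n * cc \<eta> ^ i * \<Gamma> ^ ctr E qs vs i t" for i
  proof (induction i)
    case 0
    have "Phi \<eta> V (w 0) t \<le> Fp \<eta> V (w 0) t t" by (rule Phi_le[OF e0 e1 fin tV])
    also have "\<dots> \<le> sum (w 0) V / w 0 t" using wpos by (intro Fp_le[OF e0 e1 fin tV tV]) auto
    also have "\<dots> = n" using n1 fin by (simp add: w_def wt_def ctr_def n_def)
    finally show ?case by (simp add: ctr_def)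
  next
    case (Suc i)
    then have iT: "i < T" by simp
    define q where "q = qs ! i"
    define v where "v = vs ! i"
    define C where "C = Ncomp V E q v"
    have qV: "q \<in> V" using sq lq iT by (auto simp: q_def)
    have vV: "v \<in> V" using sv lv iT by (auto simp: v_def)
    have dci: "delta_close V E (w i) (\<eta>/4) q" using dc iT by (simp add: w_def q_def)
    have posi: "\<forall>u\<in>V. 0 < w i u" using wpos by simp
    have upd: "\<forall>u\<in>V. w (Suc i) u = (if u \<in> C then w i u else w i u / gm \<eta>)"
      using w_Suc Ggm by (simp add: C_def Ncomp_def q_def v_def)
    have reply: "C \<inter> V = {q} \<or> (q \<notin> C \<and> sum (w i) (C \<inter> V) \<le> (1/2 + \<eta>/4) * sum (w i) V)"
    proof (cases "v = q")
      case True
      then have "C \<inter> V = {q}" using qV by (auto simp: C_def Ncomp_def compat_self[OF sg cg])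
      then show ?thesis by simp
    next
      case False
      have "q \<notin> C" using not_compat_q[OF sg cg qV vV False] by (simp add: C_def Ncomp_def)
      moreover have "sum (w i) (C \<inter> V) \<le> (1/2 + \<eta>/4) * sum (w i) V"
      proof -
        have "C \<inter> V = C" by (auto simp: C_def Ncomp_def)
        then show ?thesis using reply_bound[OF sg cg qV vV False dci] posi
          by (simp add: C_def wsum_def less_imp_le)
      qed
      ultimately show ?thesis by simp
    qed
    have hq: "\<forall>h\<in>V. (1/2 + \<eta>/4) * sum (w i) V < w i h \<longrightarrow> h = q"
      using heavy_query[OF sg cg qV _ dci posi] by (simp add: wsum_def)
    have st: "Phi \<eta> V (w (Suc i)) t \<le> (if t \<in> C then cc \<eta> else gg \<eta>) * Phi \<eta> V (w i) t"
      by (rule lb_step[OF e0 e1 fin tV qV posi upd reply hq])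
    have IH: "Phi \<eta> V (w i) t \<le> n * cc \<eta> ^ i * \<Gamma> ^ ctr E qs vs i t" using Suc by simp
    have tC: "t \<in> C \<longleftrightarrow> compatible E q v t" using tV by (simp add: C_def Ncomp_def)
    show ?case
    proof (cases "t \<in> C")
      case True
      have "Phi \<eta> V (w (Suc i)) t \<le> cc \<eta> * Phi \<eta> V (w i) t" using st True by simp
      also have "\<dots> \<le> cc \<eta> * (n * cc \<eta> ^ i * \<Gamma> ^ ctr E qs vs i t)"
        using IH cc_pos[OF e0 e1] by (intro mult_left_mono) auto
      finally show ?thesis using True tC ctr_Suc[of i t] by (simp add: q_def v_def algebra_simps)
    next
      case False
      have "Phi \<eta> V (w (Suc i)) t \<le> gg \<eta> * Phi \<eta> V (w i) t" using st False by simp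
      also have "\<dots> \<le> gg \<eta> * (n * cc \<eta> ^ i * \<Gamma> ^ ctr E qs vs i t)"
        using IH gg_pos[OF e0 e1] by (intro mult_left_mono) auto
      finally show ?thesis using False tC ctr_Suc[of i t] Ggm by (simp add: q_def v_def gg_def algebra_simps)
    qed
  qed
  have ctr_err: "ctr E qs vs T t \<le> num_errors E t T qs vs"
  proof -
    have "{j. j < T \<and> \<not> compatible E (qs ! j) (vs ! j) t} \<subseteq> {i. i < T \<and> \<not> correct_reply E t (qs ! i) (vs ! i)}"
    proof
      fix j assume j: "j \<in> {j. j < T \<and> \<not> compatible E (qs ! j) (vs ! j) t}"
      then have "qs ! j \<in> V" "vs ! j \<in> V" using sq sv lq lv by auto
      then show "j \<in> {i. i < T \<and> \<not> correct_reply E t (qs ! i) (vs ! i)}"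
        using j correct_compat[OF sg cg _ _ tV] by blast
    qed
    then show ?thesis unfolding ctr_def num_errors_def by (intro card_mono) auto
  qed
  show ?thesis
  proof (intro ballI impI, rule ccontr)
    fix u assume uV: "u \<in> V" and ut: "u \<noteq> t" and nlt: "\<not> ctr E qs vs (nat \<lceil>10 * log 2 (real (card V)) / \<eta>^2\<rceil>) t
           < ctr E qs vs (nat \<lceil>10 * log 2 (real (card V)) / \<eta>^2\<rceil>) u"
    then have le: "ctr E qs vs T u \<le> ctr E qs vs T t" by (simp add: T_def)
    have "w T t \<le> w T u"
    proof -
      have "\<Gamma> ^ ctr E qs vs T u \<le> \<Gamma> ^ ctr E qs vs T t" using le G1 by (intro power_increasing) auto
      then show ?thesis using n1 G1 by (simp add: w_def wt_def divide_le_cancel frac_le)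
    qed
    then have one: "1 \<le> Phi \<eta> V (w T) t"
      using Phi_ge1[OF e0 e1 fin tV uV ut] wpos by auto
    have n2: "2 \<le> real n"
    proof -
      have "{t, u} \<subseteq> V" using tV uV by auto
      then have "card {t, u} \<le> card V" using fin by (intro card_mono) auto
      then show ?thesis using ut by (simp add: n_def)
    qed
    have Tge: "10 * log 2 (real n) / \<eta>^2 \<le> real T" unfolding T_def n_def by linarith
    have lT: "real (ctr E qs vs T t) \<le> (1/2 - \<eta>) * real T" using ctr_err nerr by linarith
    have "Phi \<eta> V (w T) t \<le> n * cc \<eta> ^ T * \<Gamma> ^ ctr E qs vs T t" using chain by simp
    also have "\<dots> < 1" using final_numeric[OF e0 e1 n2 Tge lT] Ggm by simp
    finally show False using one by simp
  qed
qed

end
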